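(* Let $D$ be a slim, semimodular diagram (of size at least $4$). Then every element $x$ of the left boundary chain $C_\ell(D)$ with $x\le c_\ell(D)$ has at most one lower cover in $D$ (i.e., is not join-reducible).
   Context: A slim, semimodular diagram is a planar Hasse diagram of a finite (upper) semimodular lattice whose join-irreducible elements contain no three-element antichain. The left boundary chain $C_\ell(D)$ of a planar lattice diagram $D$ is the maximal chain from $0$ to $1$ forming the left boundary of the diagram. An element of $D$ is called doubly irreducible if it has at most one upper cover and at most one lower cover in $D$. $c_\ell(D)$ denotes the smallest doubly irreducible element of $C_\ell(D)$. *)

theory Defs
  imports "HOL-Analysis.Analysis"
begin

definition covers :: "'a::order \<Rightarrow> 'a \<Rightarrow> bool" where
  "covers a b \<longleftrightarrow> a < b \<and> \<not> (\<exists>z. a < z \<and> z < b)"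

definition lower_covers :: "'a::order \<Rightarrow> 'a set" where
  "lower_covers x = {y. covers y x}"

definition upper_covers :: "'a::order \<Rightarrow> 'a set" where
  "upper_covers x = {y. covers x y}"

definition upper_semimodular :: "'a::lattice itself \<Rightarrow> bool" where
  "upper_semimodular _ \<longleftrightarrow>
     (\<forall>a b c :: 'a. covers a b \<longrightarrow> (sup a c = sup b c \<or> covers (sup a c) (sup b c)))"

definition join_irreducible :: "'a::lattice \<Rightarrow> bool" where
  "join_irreducible x \<longleftrightarrow> (\<exists>y. y < x) \<and> (\<forall>a b. x = sup a b \<longrightarrow> x = a \<or> x = b)"

definition slim :: "'a::lattice itself \<Rightarrow> bool" where
  "slim _ \<longleftrightarrow> \<not> (\<exists>a b c :: 'a. join_irreducible a \<and> join_irreducible b \<and> join_irreducible c \<and>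
       a \<noteq> b \<and> a \<noteq> c \<and> b \<noteq> c \<and>
       \<not> (a \<le> b \<or> b \<le> a) \<and> \<not> (a \<le> c \<or> c \<le> a) \<and> \<not> (b \<le> c \<or> c \<le> b))"

definition doubly_irreducible :: "'a::order \<Rightarrow> bool" where
  "doubly_irreducible x \<longleftrightarrow> card (upper_covers x) \<le> 1 \<and> card (lower_covers x) \<le> 1"

text \<open>A planar Hasse diagram: each element is placed at a point of the plane
  (first coordinate = horizontal, second = vertical), each covering pair is drawn
  as a straight segment going strictly upwards, distinct edges meet only in common
  endpoints, and no vertex lies on an edge other than at its endpoints.\<close>

definition planar_diagram :: "('a::order \<Rightarrow> real \<times> real) \<Rightarrow> bool" where
  "planar_diagram pos \<longleftrightarrow>
     inj pos \<and>
     (\<forall>a b. covers a b \<longrightarrow> snd (pos a) < snd (pos b)) \<and>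
     (\<forall>a b c d. covers a b \<and> covers c d \<and> (a, b) \<noteq> (c, d) \<longrightarrow>
        closed_segment (pos a) (pos b) \<inter> closed_segment (pos c) (pos d)
          \<subseteq> {pos a, pos b} \<inter> {pos c, pos d}) \<and>
     (\<forall>a b c. covers a b \<and> c \<noteq> a \<and> c \<noteq> b \<longrightarrow> pos c \<notin> closed_segment (pos a) (pos b))"

definition drawing :: "('a::order \<Rightarrow> real \<times> real) \<Rightarrow> (real \<times> real) set" where
  "drawing pos = range pos \<union> \<Union> {closed_segment (pos a) (pos b) | a b. covers a b}"

text \<open>Left boundary chain: the elements lying on the left boundary of the drawing,
  i.e. no point of the drawing at the same height lies strictly to their left.\<close>
definition left_boundary_chain :: "('a::order \<Rightarrow> real \<times> real) \<Rightarrow> 'a set" where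
  "left_boundary_chain pos =
     {x. \<forall>q \<in> drawing pos. snd q = snd (pos x) \<longrightarrow> fst (pos x) \<le> fst q}"

definition is_c_left :: "('a::order \<Rightarrow> real \<times> real) \<Rightarrow> 'a \<Rightarrow> bool" where
  "is_c_left pos c \<longleftrightarrow> c \<in> left_boundary_chain pos \<and> doubly_irreducible c \<and>
     (\<forall>d \<in> left_boundary_chain pos. doubly_irreducible d \<longrightarrow> c \<le> d)"

end

theory Submission
  imports Defs
begin


definition interp :: "real \<times> real \<Rightarrow> real \<times> real \<Rightarrow> real \<Rightarrow> real" where
  "interp P Q t = fst P + (t - snd P) / (snd Q - snd P) * (fst Q - fst P)"

lemma seg_param:
  fixes P Q p :: "real \<times> real"
  assumes "p \<in> closed_segment P Q"
  obtains u where "0 \<le> u" "u \<le> 1" "fst p = (1-u) * fst P + u * fst Q" "snd p = (1-u) * snd P + u * snd Q"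
  proof -
  from assms obtain u where "p = (1 - u) *\<^sub>R P + u *\<^sub>R Q" "0 \<le> u" "u \<le> 1"
    unfolding closed_segment_def by blast
  thus ?thesis using that by simp
qed

lemma seg_snd:
  fixes P Q p :: "real \<times> real"
  assumes "p \<in> closed_segment P Q" "snd P < snd Q"
  shows "snd P \<le> snd p \<and> snd p \<le> snd Q"
proof -
  obtain u where u: "0 \<le> u" "u \<le> 1" "fst p = (1-u) * fst P + u * fst Q" "snd p = (1-u) * snd P + u * snd Q"
    using seg_param[OF assms(1)] by blast
  have "snd p - snd P = u * (snd Q - snd P)" using u by (simp add: algebra_simps)
  moreover have "snd Q - snd p = (1-u) * (snd Q - snd P)" using u by (simp add: algebra_simps)
  ultimately show ?thesis using u assms(2) by (metis diff_ge_0_iff_ge mult_nonneg_nonneg diff_ge_0_iff_ge less_imp_le)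
qed

lemma seg_interp:
  fixes P Q p :: "real \<times> real"
  assumes "p \<in> closed_segment P Q" "snd P < snd Q"
  shows "interp P Q (snd p) = fst p"
proof -
  obtain u where u: "0 \<le> u" "u \<le> 1" "fst p = (1-u) * fst P + u * fst Q" "snd p = (1-u) * snd P + u * snd Q"
    using seg_param[OF assms(1)] by blast
  have "snd p - snd P = u * (snd Q - snd P)" using u by (simp add: algebra_simps)
  hence e: "(snd p - snd P) / (snd Q - snd P) = u" using assms(2) by simp
  show ?thesis unfolding interp_def e using u(3) by (simp add: algebra_simps)
qed

lemma seg_low:
  fixes P Q p :: "real \<times> real"
  assumes "p \<in> closed_segment P Q" "snd P < snd Q" "snd p = snd P"
  shows "p = P"
proof -
  obtain u where u: "0 \<le> u" "u \<le> 1" "fst p = (1-u) * fst P + u * fst Q" "snd p = (1-u) * snd P + u * snd Q"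
    using seg_param[OF assms(1)] by blast
  have "snd p = snd P + u * (snd Q - snd P)" using u(4) by (simp add: algebra_simps)
  hence "u * (snd Q - snd P) = 0" using assms(3) by linarith
  moreover have "snd Q - snd P \<noteq> 0" using assms(2) by simp
  ultimately have "u = 0" by simp
  thus ?thesis using u by (simp add: prod_eq_iff)
qed

lemma seg_high:
  fixes P Q p :: "real \<times> real"
  assumes "p \<in> closed_segment P Q" "snd P < snd Q" "snd p = snd Q"
  shows "p = Q"
proof -
  obtain u where u: "0 \<le> u" "u \<le> 1" "fst p = (1-u) * fst P + u * fst Q" "snd p = (1-u) * snd P + u * snd Q"
    using seg_param[OF assms(1)] by blast
  have "(1-u) * (snd Q - snd P) = 0" using u assms(3) by (simp add: algebra_simps)
  hence "u = 1" using assms(2) by (simp add: mult_eq_0_iff)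
  thus ?thesis using u by (simp add: prod_eq_iff)
qed

lemma seg_pt:
  fixes P Q p :: "real \<times> real"
  assumes "snd P < snd Q" "snd P \<le> t" "t \<le> snd Q"
  shows "(interp P Q t, t) \<in> closed_segment P Q"
proof -
  define u where "u = (t - snd P) / (snd Q - snd P)"
  have u0: "0 \<le> u" "u \<le> 1" using assms by (auto simp: u_def divide_simps)
  have "u * (snd Q - snd P) = t - snd P" using assms by (simp add: u_def)
  hence "t = (1-u) * snd P + u * snd Q" by (simp add: algebra_simps)
  moreover have "interp P Q t = (1-u) * fst P + u * fst Q" unfolding interp_def u_def[symmetric] by (simp add: algebra_simps)
  ultimately have "(interp P Q t, t) = (1 - u) *\<^sub>R P + u *\<^sub>R Q" by (simp add: prod_eq_iff)
  thus ?thesis using u0 unfolding closed_segment_def by blast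
qed

lemma interp_low[simp]: "interp P Q (snd P) = fst P" by (simp add: interp_def)
lemma interp_high: "snd P < snd Q \<Longrightarrow> interp P Q (snd Q) = fst Q" by (simp add: interp_def)



lemma cover_above:
  fixes a b :: "'a::{order,finite}"
  assumes "a < b" shows "\<exists>c. covers a c \<and> c \<le> b"
proof -
  obtain m where m: "m \<in> {z. a < z \<and> z \<le> b}" "\<forall>z\<in>{z. a < z \<and> z \<le> b}. z \<le> m \<longrightarrow> m = z"
    using finite_has_minimal[of "{z. a < z \<and> z \<le> b}"] assms by auto
  have "covers a m" unfolding covers_def
  proof (intro conjI notI)
    show "a < m" using m by auto
  next
    assume "\<exists>z. a < z \<and> z < m"
    then obtain z where "a < z" "z < m" by blast
    moreover hence "z \<le> b" using m by auto
    ultimately show False using m(2) by fastforce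
  qed
  thus ?thesis using m by auto
qed

lemma cover_below:
  fixes a b :: "'a::{order,finite}"
  assumes "a < b" shows "\<exists>c. covers c b \<and> a \<le> c"
proof -
  obtain m where m: "m \<in> {z. a \<le> z \<and> z < b}" "\<forall>z\<in>{z. a \<le> z \<and> z < b}. m \<le> z \<longrightarrow> m = z"
    using finite_has_maximal[of "{z. a \<le> z \<and> z < b}"] assms by auto
  have "covers m b" unfolding covers_def
  proof (intro conjI notI)
    show "m < b" using m by auto
  next
    assume "\<exists>z. m < z \<and> z < b"
    then obtain z where "m < z" "z < b" by blast
    moreover hence "a \<le> z" using m by auto
    ultimately show False using m(2) by fastforce
  qed
  thus ?thesis using m by auto
qed

lemma interval_less:
  fixes a b c :: "'a::{order,finite}"
  assumes "a < c" "c \<le> b"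
  shows "card {z. c \<le> z \<and> z \<le> b} < card {z. a \<le> z \<and> z \<le> b}"
proof (rule psubset_card_mono)
  show "{z. c \<le> z \<and> z \<le> b} \<subset> {z. a \<le> z \<and> z \<le> b}"
  proof
    show "{z. c \<le> z \<and> z \<le> b} \<subseteq> {z. a \<le> z \<and> z \<le> b}" using assms by auto
    have "a \<in> {z. a \<le> z \<and> z \<le> b}" "a \<notin> {z. c \<le> z \<and> z \<le> b}" using assms by auto
    thus "{z. c \<le> z \<and> z \<le> b} \<noteq> {z. a \<le> z \<and> z \<le> b}" by blast
  qed
qed simp

lemma height_mono:
  fixes pos :: "'a::{order,finite} \<Rightarrow> real \<times> real"
  assumes pd: "planar_diagram pos"
  shows "a < b \<Longrightarrow> snd (pos a) < snd (pos b)"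
proof (induction "card {z. a \<le> z \<and> z \<le> b}" arbitrary: a rule: less_induct)
  case less
  obtain c where c: "covers a c" "c \<le> b" using cover_above[OF less.prems] by blast
  have ac: "snd (pos a) < snd (pos c)" using pd c(1) unfolding planar_diagram_def by blast
  show ?case
  proof (cases "c = b")
    case True thus ?thesis using ac by simp
  next
    case False
    hence "c < b" using c by simp
    have "a < c" using c(1) unfolding covers_def by simp
    from less.hyps[OF interval_less[OF this c(2)] \<open>c < b\<close>] ac show ?thesis by simp
  qed
qed

lemma height_mono_le:
  fixes pos :: "'a::{order,finite} \<Rightarrow> real \<times> real"
  assumes pd: "planar_diagram pos" "a \<le> b"
  shows "snd (pos a) \<le> snd (pos b)"
  using height_mono[OF pd(1), of a b] pd(2) by (cases "a = b") (auto simp: less_le)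

fun cchain :: "'a::order list \<Rightarrow> bool" where
  "cchain [] = False"
| "cchain [a] = True"
| "cchain (a # b # r) = (covers a b \<and> cchain (b # r))"

fun pts :: "('a \<Rightarrow> real \<times> real) \<Rightarrow> 'a list \<Rightarrow> (real \<times> real) set" where
  "pts pos [] = {}"
| "pts pos [a] = {pos a}"
| "pts pos (a # b # r) = closed_segment (pos a) (pos b) \<union> pts pos (b # r)"

fun Xc :: "('a \<Rightarrow> real \<times> real) \<Rightarrow> 'a list \<Rightarrow> real \<Rightarrow> real" where
  "Xc pos [] t = 0"
| "Xc pos [a] t = fst (pos a)"
| "Xc pos (a # b # r) t = (if t \<le> snd (pos b) then interp (pos a) (pos b) t else Xc pos (b # r) t)"

lemma chain_exists:
  fixes a b :: "'a::{order,finite}"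
  shows "a \<le> b \<Longrightarrow> \<exists>cs. cchain cs \<and> hd cs = a \<and> last cs = b"
proof (induction "card {z. a \<le> z \<and> z \<le> b}" arbitrary: a rule: less_induct)
  case less
  show ?case
  proof (cases "a = b")
    case True thus ?thesis by (intro exI[of _ "[a]"]) simp
  next
    case False
    hence "a < b" using less.prems by simp
    obtain c where c: "covers a c" "c \<le> b" using cover_above[OF \<open>a < b\<close>] by blast
    have "a < c" using c(1) unfolding covers_def by simp
    obtain cs where cs: "cchain cs" "hd cs = c" "last cs = b"
      using less.hyps[OF interval_less[OF \<open>a < c\<close> c(2)] c(2)] by blast
    then obtain r where "cs = c # r" by (cases cs) auto
    thus ?thesis using cs c by (intro exI[of _ "a # cs"]) auto
  qed
qed

lemma cchain_order: "cchain cs \<Longrightarrow> z \<in> set cs \<Longrightarrow> hd cs \<le> z \<and> z \<le> last cs"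
proof (induction cs arbitrary: z rule: cchain.induct)
  case (3 a b r)
  from 3(2) have "covers a b" by simp
  hence ab: "a \<le> b" unfolding covers_def by (simp add: less_imp_le)
  have cb: "cchain (b # r)" using 3(2) by simp
  have "b \<le> last (b # r)" using 3(1)[OF cb, of b] by simp
  thus ?case using 3 ab by (auto intro: order.trans)
qed auto

lemma cchain_append:
  "cchain xs \<Longrightarrow> cchain ys \<Longrightarrow> last xs = hd ys \<Longrightarrow>
    cchain (xs @ tl ys) \<and> hd (xs @ tl ys) = hd xs \<and> last (xs @ tl ys) = last ys \<and>
    set (xs @ tl ys) = set xs \<union> set ys \<and> pts pos xs \<subseteq> pts pos (xs @ tl ys)"
proof (induction xs rule: cchain.induct)
  case (2 a)
  then obtain r where ys: "ys = a # r" by (cases ys) auto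
  show ?case
  proof (cases r)
    case Nil thus ?thesis using ys by simp
  next
    case (Cons c r') thus ?thesis using ys 2 by auto
  qed
next
  case (3 a b r)
  hence IH: "cchain ((b # r) @ tl ys) \<and> hd ((b # r) @ tl ys) = b \<and> last ((b # r) @ tl ys) = last ys \<and>
    set ((b # r) @ tl ys) = set (b # r) \<union> set ys \<and> pts pos (b # r) \<subseteq> pts pos ((b # r) @ tl ys)" by auto
  then obtain r2 where e: "(b # r) @ tl ys = b # r2" by auto
  have eq: "(a # b # r) @ tl ys = a # b # r2" using e by simp
  have IH': "cchain (b # r2) \<and> last (b # r2) = last ys \<and>
    set (b # r2) = set (b # r) \<union> set ys \<and> pts pos (b # r) \<subseteq> pts pos (b # r2)" using IH e by metis
  have "covers a b" using 3(2) by simp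
  thus ?case unfolding eq using IH' by auto
qed auto



lemma cover_h: "planar_diagram pos \<Longrightarrow> covers a b \<Longrightarrow> snd (pos a) < snd (pos b)"
  unfolding planar_diagram_def by blast

lemma pts_heights:
  fixes pos :: "'a::{order,finite} \<Rightarrow> real \<times> real"
  assumes pd: "planar_diagram pos"
  shows "cchain W \<Longrightarrow> p \<in> pts pos W \<Longrightarrow> snd (pos (hd W)) \<le> snd p \<and> snd p \<le> snd (pos (last W))"
proof (induction W rule: cchain.induct)
  case (3 a b r)
  have ab: "covers a b" and cb: "cchain (b # r)" using 3(2) by auto
  have hab: "snd (pos a) < snd (pos b)" using cover_h[OF pd ab] .
  have "b \<le> last (b # r)" using cchain_order[OF cb, of b] by simp
  hence hbl: "snd (pos b) \<le> snd (pos (last (b # r)))" using height_mono_le[OF pd] by blast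
  show ?case
  proof (cases "p \<in> closed_segment (pos a) (pos b)")
    case True thus ?thesis using seg_snd[OF True hab] hbl by auto
  next
    case False
    hence "p \<in> pts pos (b # r)" using 3(3) by simp
    thus ?thesis using 3(1)[OF cb] hab by auto
  qed
qed auto

lemma pts_low:
  fixes pos :: "'a::{order,finite} \<Rightarrow> real \<times> real"
  assumes pd: "planar_diagram pos"
  and "cchain (b # r)" "p \<in> pts pos (b # r)" "snd p = snd (pos b)"
  shows "p = pos b"
proof (cases r)
  case Nil thus ?thesis using assms by simp
next
  case (Cons c r')
  have bc: "covers b c" and cc: "cchain (c # r')" using assms(2) Cons by auto
  have hbc: "snd (pos b) < snd (pos c)" using cover_h[OF pd bc] .
  show ?thesis
  proof (cases "p \<in> closed_segment (pos b) (pos c)")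
    case True thus ?thesis using seg_low[OF True hbc] assms(4) by simp
  next
    case False
    hence "p \<in> pts pos (c # r')" using assms(3) Cons by simp
    thus ?thesis using pts_heights[OF pd cc] hbc assms(4) by fastforce
  qed
qed

lemma Xc_pts:
  fixes pos :: "'a::{order,finite} \<Rightarrow> real \<times> real"
  assumes pd: "planar_diagram pos"
  shows "cchain W \<Longrightarrow> p \<in> pts pos W \<Longrightarrow> Xc pos W (snd p) = fst p"
proof (induction W rule: cchain.induct)
  case (3 a b r)
  have ab: "covers a b" and cb: "cchain (b # r)" using 3(2) by auto
  have hab: "snd (pos a) < snd (pos b)" using cover_h[OF pd ab] .
  show ?case
  proof (cases "p \<in> closed_segment (pos a) (pos b)")
    case True thus ?thesis using seg_interp[OF True hab] seg_snd[OF True hab] by simp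
  next
    case False
    hence pb: "p \<in> pts pos (b # r)" using 3(3) by simp
    show ?thesis
    proof (cases "snd p \<le> snd (pos b)")
      case True
      hence "snd p = snd (pos b)" using pts_heights[OF pd cb pb] by simp
      hence "p = pos b" using pts_low[OF pd cb pb] by simp
      thus ?thesis using interp_high[OF hab] by simp
    next
      case False thus ?thesis using 3(1)[OF cb pb] by simp
    qed
  qed
qed auto

lemma Xc_in:
  fixes pos :: "'a::{order,finite} \<Rightarrow> real \<times> real"
  assumes pd: "planar_diagram pos"
  shows "cchain W \<Longrightarrow> snd (pos (hd W)) \<le> t \<Longrightarrow> t \<le> snd (pos (last W)) \<Longrightarrow> (Xc pos W t, t) \<in> pts pos W"
proof (induction W rule: cchain.induct)
  case (3 a b r)
  have ab: "covers a b" and cb: "cchain (b # r)" using 3(2) by auto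
  have hab: "snd (pos a) < snd (pos b)" using cover_h[OF pd ab] .
  show ?case
  proof (cases "t \<le> snd (pos b)")
    case True thus ?thesis using seg_pt[OF hab, of t] 3(3) by simp
  next
    case False thus ?thesis using 3(1)[OF cb] 3(4) by simp
  qed
qed auto

lemma set_pts: "cchain W \<Longrightarrow> z \<in> set W \<Longrightarrow> pos z \<in> pts pos W"
proof (induction W rule: cchain.induct)
  case (3 a b r)
  thus ?case by (cases "z = a") auto
qed auto

lemma Xc_cont:
  fixes pos :: "'a::{order,finite} \<Rightarrow> real \<times> real"
  assumes pd: "planar_diagram pos"
  shows "cchain W \<Longrightarrow> continuous_on {snd (pos (hd W)) .. snd (pos (last W))} (Xc pos W)"
proof (induction W rule: cchain.induct)
  case (3 a b r)
  have ab: "covers a b" and cb: "cchain (b # r)" using 3(2) by auto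
  have hab: "snd (pos a) < snd (pos b)" using cover_h[OF pd ab] .
  have e: "Xc pos (a # b # r) = (\<lambda>t. if id t \<le> snd (pos b) then interp (pos a) (pos b) t else Xc pos (b # r) t)"
    by (rule ext) simp
  have c1: "continuous_on S (interp (pos a) (pos b))" for S
    unfolding interp_def by (intro continuous_intros) (use hab in auto)
  have c2: "continuous_on {x \<in> {snd (pos (hd (a # b # r)))..snd (pos (last (a # b # r)))}. snd (pos b) \<le> id x} (Xc pos (b # r))"
    by (rule continuous_on_subset[OF 3(1)[OF cb]]) auto
  have agree: "interp (pos a) (pos b) (snd (pos b)) = Xc pos (b # r) (snd (pos b))"
    using interp_high[OF hab] Xc_pts[OF pd cb set_pts[OF cb, of b]] by simp
  show ?case unfolding e
    by (rule continuous_on_cases_le[OF c1 c2]) (auto intro: continuous_intros simp: agree)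
qed auto

lemma pts_vertex:
  fixes pos :: "'a::{order,finite} \<Rightarrow> real \<times> real"
  assumes pd: "planar_diagram pos"
  shows "cchain W \<Longrightarrow> pos z \<in> pts pos W \<Longrightarrow> z \<in> set W"
proof (induction W rule: cchain.induct)
  case (2 a) thus ?case using pd unfolding planar_diagram_def by (auto dest: injD)
next
  case (3 a b r)
  have ab: "covers a b" and cb: "cchain (b # r)" using 3(2) by auto
  show ?case
  proof (cases "pos z \<in> closed_segment (pos a) (pos b)")
    have v: "\<And>c. c \<noteq> a \<Longrightarrow> c \<noteq> b \<Longrightarrow> pos c \<notin> closed_segment (pos a) (pos b)"
      using pd ab unfolding planar_diagram_def by blast
    case True thus ?thesis using v by auto
  next
    case False thus ?thesis using 3 cb by auto
  qed
qed auto

lemma pts_drawing: "cchain W \<Longrightarrow> pts pos W \<subseteq> drawing pos"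
proof (induction W rule: cchain.induct)
  case (3 a b r)
  hence "covers a b" by simp
  hence "closed_segment (pos a) (pos b) \<subseteq> drawing pos" unfolding drawing_def by blast
  thus ?case using 3 by auto
qed (auto simp: drawing_def)

lemma pts_edge:
  "cchain W \<Longrightarrow> p \<in> pts pos W \<Longrightarrow> (\<exists>a. W = [a] \<and> p = pos a) \<or>
     (\<exists>a b. covers a b \<and> a \<in> set W \<and> b \<in> set W \<and> p \<in> closed_segment (pos a) (pos b))"
proof (induction W rule: cchain.induct)
  case (3 a b r)
  show ?case
  proof (cases "p \<in> closed_segment (pos a) (pos b)")
    case True thus ?thesis using 3(2) by auto
  next
    case False
    hence "p \<in> pts pos (b # r)" using 3 by simp
    hence "(\<exists>a. b # r = [a] \<and> p = pos a) \<or>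
     (\<exists>a' b'. covers a' b' \<and> a' \<in> set (b # r) \<and> b' \<in> set (b # r) \<and> p \<in> closed_segment (pos a') (pos b'))"
      using 3 by simp
    thus ?thesis using 3(2) by fastforce
  qed
qed auto

lemma disjoint_chains:
  fixes pos :: "'a::{order,finite} \<Rightarrow> real \<times> real"
  assumes pd: "planar_diagram pos"
  and W: "cchain W" and B: "cchain B" and dis: "set W \<inter> set B = {}"
  and p: "p \<in> pts pos W" "p \<in> pts pos B"
  shows False
proof -
  have inj: "inj pos" using pd unfolding planar_diagram_def by blast
  have vert: "\<And>a b c. covers a b \<Longrightarrow> c \<noteq> a \<Longrightarrow> c \<noteq> b \<Longrightarrow> pos c \<notin> closed_segment (pos a) (pos b)"
    using pd unfolding planar_diagram_def by blast
  have cross: "\<And>a b c d. covers a b \<Longrightarrow> covers c d \<Longrightarrow> (a, b) \<noteq> (c, d) \<Longrightarrow>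
        closed_segment (pos a) (pos b) \<inter> closed_segment (pos c) (pos d) \<subseteq> {pos a, pos b} \<inter> {pos c, pos d}"
    using pd unfolding planar_diagram_def by blast
  from pts_edge[OF W p(1)] pts_edge[OF B p(2)] show False
  proof (elim disjE exE conjE)
    fix a c assume "W = [a]" "p = pos a" "B = [c]" "p = pos c"
    thus False using dis inj by (auto dest: injD)
  next
    fix a c d assume "W = [a]" "p = pos a" "covers c d" "c \<in> set B" "d \<in> set B" "p \<in> closed_segment (pos c) (pos d)"
    thus False using dis vert[of c d a] by auto
  next
    fix a b c assume "B = [c]" "p = pos c" "covers a b" "a \<in> set W" "b \<in> set W" "p \<in> closed_segment (pos a) (pos b)"
    thus False using dis vert[of a b c] by auto
  next
    fix a b c d assume h: "covers a b" "a \<in> set W" "b \<in> set W" "p \<in> closed_segment (pos a) (pos b)"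
      "covers c d" "c \<in> set B" "d \<in> set B" "p \<in> closed_segment (pos c) (pos d)"
    have "(a, b) \<noteq> (c, d)" using dis h by auto
    hence "p \<in> {pos a, pos b} \<inter> {pos c, pos d}" using cross[OF h(1) h(5)] h by blast
    thus False using dis h inj by (auto dest: injD)
  qed
qed

lemma crossing:
  fixes pos :: "'a::{order,finite} \<Rightarrow> real \<times> real"
  assumes pd: "planar_diagram pos"
  and W: "cchain W" and B: "cchain B" and t: "t1 \<le> t2"
  and "snd (pos (hd W)) \<le> t1" "t2 \<le> snd (pos (last W))"
  and "snd (pos (hd B)) \<le> t1" "t2 \<le> snd (pos (last B))"
  and "Xc pos W t1 \<le> Xc pos B t1" "Xc pos B t2 \<le> Xc pos W t2"
  shows "\<exists>p. p \<in> pts pos W \<and> p \<in> pts pos B"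
proof -
  let ?g = "\<lambda>t. Xc pos W t - Xc pos B t"
  have "continuous_on {t1..t2} (Xc pos W)"
    by (rule continuous_on_subset[OF Xc_cont[OF pd W]]) (use assms in auto)
  moreover have "continuous_on {t1..t2} (Xc pos B)"
    by (rule continuous_on_subset[OF Xc_cont[OF pd B]]) (use assms in auto)
  ultimately have "continuous_on {t1..t2} ?g" by (intro continuous_intros)
  then obtain t where tt: "t1 \<le> t" "t \<le> t2" "?g t = 0"
    using IVT'[of ?g t1 0 t2] assms by auto
  have "(Xc pos W t, t) \<in> pts pos W" using Xc_in[OF pd W, of t] assms tt by linarith
  moreover have "(Xc pos B t, t) \<in> pts pos B" using Xc_in[OF pd B] assms tt by auto
  ultimately show ?thesis using tt(3) by (intro exI[of _ "(Xc pos W t, t)"]) simp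
qed



lemma leftmost:
  "x \<in> left_boundary_chain pos \<Longrightarrow> q \<in> drawing pos \<Longrightarrow> snd q = snd (pos x) \<Longrightarrow> fst (pos x) \<le> fst q"
  unfolding left_boundary_chain_def by blast

lemma G2:
  fixes pos :: "'a::{lattice,finite} \<Rightarrow> real \<times> real"
  assumes pd: "planar_diagram pos"
  and xL: "x \<in> left_boundary_chain pos" and yL: "y \<in> left_boundary_chain pos"
  and yx: "y < x" and yw: "covers y w" and wx: "\<not> w \<le> x"
  and bx: "covers b x" and yb: "\<not> y \<le> b"
  shows False
proof -
  define v where "v = sup w x"
  have "w \<le> v" "x \<le> v" unfolding v_def by auto
  obtain cw where cw: "cchain cw" "hd cw = w" "last cw = v" using chain_exists[OF \<open>w \<le> v\<close>] by blast
  have cyw: "cchain [y, w]" using yw by simp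
  define W where "W = [y, w] @ tl cw"
  have W: "cchain W" "hd W = y" "last W = v" "set W = {y, w} \<union> set cw"
    using cchain_append[OF cyw cw(1), of pos] cw unfolding W_def by auto
  have bb: "inf y b \<le> b" by simp
  obtain cb where cb: "cchain cb" "hd cb = inf y b" "last cb = b" using chain_exists[OF bb] by blast
  have cbx: "cchain [b, x]" using bx by simp
  define B where "B = cb @ tl [b, x]"
  have B: "cchain B" "hd B = inf y b" "last B = x" "set B = set cb \<union> {b, x}"
    using cchain_append[OF cb(1) cbx, of pos] cb unfolding B_def by auto
  have bxle: "b \<le> x" using bx unfolding covers_def by (simp add: less_imp_le)
  have ywle: "y \<le> w" using yw unfolding covers_def by (simp add: less_imp_le)
  have dis: "set W \<inter> set B = {}"
  proof (rule ccontr)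
    assume "set W \<inter> set B \<noteq> {}"
    then obtain z where z: "z \<in> set W" "z \<in> set B" by blast
    have zW: "z = y \<or> w \<le> z" using z(1) W(4) cchain_order[OF cw(1)] cw(2) by auto
    have zB: "z \<le> b \<or> z = x" using z(2) B(4) cchain_order[OF cb(1)] cb(3) by auto
    from zW zB show False
    proof (elim disjE)
      assume "z = y" "z \<le> b" thus False using yb by simp
    next
      assume "z = y" "z = x" thus False using yx by simp
    next
      assume "w \<le> z" "z \<le> b" thus False using wx bxle by (meson order.trans)
    next
      assume "w \<le> z" "z = x" thus False using wx by simp
    qed
  qed
  have hyx: "snd (pos y) \<le> snd (pos x)" using height_mono_le[OF pd] yx by (simp add: less_imp_le)
  have hxv: "snd (pos x) \<le> snd (pos v)" using height_mono_le[OF pd \<open>x \<le> v\<close>] .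
  have hib: "snd (pos (inf y b)) \<le> snd (pos y)" using height_mono_le[OF pd] by simp
  have XWy: "Xc pos W (snd (pos y)) = fst (pos y)"
    using Xc_pts[OF pd W(1) set_pts[OF W(1), of y]] W by simp
  have XBx: "Xc pos B (snd (pos x)) = fst (pos x)"
    using Xc_pts[OF pd B(1) set_pts[OF B(1), of x]] B by simp
  have "(Xc pos B (snd (pos y)), snd (pos y)) \<in> pts pos B"
    using Xc_in[OF pd B(1)] B hib hyx by simp
  hence t1: "Xc pos W (snd (pos y)) \<le> Xc pos B (snd (pos y))"
    using leftmost[OF yL] pts_drawing[OF B(1)] XWy by fastforce
  have "(Xc pos W (snd (pos x)), snd (pos x)) \<in> pts pos W"
    using Xc_in[OF pd W(1)] W hxv hyx by simp
  hence t2: "Xc pos B (snd (pos x)) \<le> Xc pos W (snd (pos x))"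
    using leftmost[OF xL] pts_drawing[OF W(1)] XBx by fastforce
  obtain p where "p \<in> pts pos W" "p \<in> pts pos B"
    using crossing[OF pd W(1) B(1) hyx _ _ _ _ t1 t2] W B hyx hxv hib by auto
  thus False using disjoint_chains[OF pd W(1) B(1) dis] by blast
qed



lemma interp_alt:
  "snd P < snd Q \<Longrightarrow> interp P Q t = fst Q + (t - snd Q) * ((fst Q - fst P) / (snd Q - snd P))"
  unfolding interp_def by (simp add: field_simps)

lemma G1:
  fixes pos :: "'a::{lattice,finite} \<Rightarrow> real \<times> real"
  assumes pd: "planar_diagram pos"
  and xL: "x \<in> left_boundary_chain pos" and ne: "lower_covers x \<noteq> {}"
  shows "\<exists>y. covers y x \<and> y \<in> left_boundary_chain pos"
proof -
  let ?LC = "lower_covers x"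
  let ?h = "\<lambda>z. snd (pos z)"
  let ?I = "\<lambda>z t. interp (pos z) (pos x) t"
  have fin: "finite ?LC" by simp
  have LCc: "z \<in> ?LC \<longleftrightarrow> covers z x" for z unfolding lower_covers_def by simp
  have LCh: "z \<in> ?LC \<Longrightarrow> ?h z < ?h x" for z using cover_h[OF pd] LCc by blast
  define ts where "ts = Max (?h ` ?LC)"
  have ts_ge: "z \<in> ?LC \<Longrightarrow> ?h z \<le> ts" for z unfolding ts_def using fin by simp
  have "ts \<in> ?h ` ?LC" unfolding ts_def using fin ne by simp
  hence ts_lt: "ts < ?h x" using LCh by auto
  define m where "m = Min ((\<lambda>z. ?I z ts) ` ?LC)"
  have "m \<in> (\<lambda>z. ?I z ts) ` ?LC" unfolding m_def using fin ne by simp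
  then obtain y where yLC: "y \<in> ?LC" and ym: "?I y ts = m" by blast
  have ymin: "z \<in> ?LC \<Longrightarrow> ?I y ts \<le> ?I z ts" for z unfolding ym m_def using fin by simp
  have yx: "covers y x" using yLC LCc by simp
  have hyx: "?h y < ?h x" using LCh yLC .
  have inj: "inj pos" using pd unfolding planar_diagram_def by blast
  have cross: "\<And>a b c d. covers a b \<Longrightarrow> covers c d \<Longrightarrow> (a, b) \<noteq> (c, d) \<Longrightarrow>
        closed_segment (pos a) (pos b) \<inter> closed_segment (pos c) (pos d) \<subseteq> {pos a, pos b} \<inter> {pos c, pos d}"
    using pd unfolding planar_diagram_def by blast
  have slope: "?I y t < ?I z t" if zLC: "z \<in> ?LC" "z \<noteq> y" and t: "t < ?h x" for z t
  proof -
    have zx: "covers z x" using zLC LCc by simp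
    have hzx: "?h z < ?h x" using LCh zLC(1) .
    have strict: "?I y ts < ?I z ts"
    proof (rule ccontr)
      assume "\<not> ?I y ts < ?I z ts"
      hence eq: "?I y ts = ?I z ts" using ymin[OF zLC(1)] by simp
      have "(?I y ts, ts) \<in> closed_segment (pos y) (pos x)"
        using seg_pt[OF hyx] ts_ge[OF yLC] ts_lt by simp
      moreover have "(?I y ts, ts) \<in> closed_segment (pos z) (pos x)"
        using seg_pt[OF hzx] ts_ge[OF zLC(1)] ts_lt eq by simp
      moreover have "(y, x) \<noteq> (z, x)" using zLC by simp
      ultimately have P: "(?I y ts, ts) \<in> {pos y, pos x} \<inter> {pos z, pos x}" using cross[OF yx zx] by blast
      have "(?I y ts, ts) \<noteq> pos x" using ts_lt by (metis less_irrefl snd_conv)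
      hence "pos y = pos z" using P by auto
      thus False using inj zLC by (auto dest: injD)
    qed
    define sy where "sy = (fst (pos x) - fst (pos y)) / (?h x - ?h y)"
    define sz where "sz = (fst (pos x) - fst (pos z)) / (?h x - ?h z)"
    have Iy: "?I y s = fst (pos x) + (s - ?h x) * sy" for s using interp_alt[OF hyx] sy_def by simp
    have Iz: "?I z s = fst (pos x) + (s - ?h x) * sz" for s using interp_alt[OF hzx] sz_def by simp
    have "(ts - ?h x) * sy < (ts - ?h x) * sz" using strict Iy Iz by simp
    hence "sz < sy" using ts_lt by (simp add: mult_less_cancel_left_neg)
    hence "(t - ?h x) * sy < (t - ?h x) * sz" using t by (simp add: mult_less_cancel_left_neg)
    thus ?thesis using Iy Iz by simp
  qed
  have "y \<in> left_boundary_chain pos"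
  proof (rule ccontr)
    assume "y \<notin> left_boundary_chain pos"
    then obtain q where q: "q \<in> drawing pos" "snd q = ?h y" "fst q < fst (pos y)"
      unfolding left_boundary_chain_def by force
    have bad_y: "y \<notin> set W" if "cchain W" "q \<in> pts pos W" for W
    proof
      assume "y \<in> set W"
      hence "Xc pos W (?h y) = fst (pos y)" using Xc_pts[OF pd that(1) set_pts[OF that(1)]] by simp
      moreover have "Xc pos W (?h y) = fst q" using Xc_pts[OF pd that] q(2) by simp
      ultimately show False using q(3) by simp
    qed
    obtain S r where S: "cchain S" "q \<in> pts pos S" "last S = r"
      and Sform: "(S = [r] \<and> q = pos r) \<or> (\<exists>p1. S = [p1, r] \<and> covers p1 r \<and> q \<in> closed_segment (pos p1) (pos r))"
    proof -
      from q(1) consider "q \<in> range pos" | "\<exists>a b. covers a b \<and> q \<in> closed_segment (pos a) (pos b)"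
        unfolding drawing_def by blast
      thus ?thesis
      proof cases
        case 1 then obtain p where "q = pos p" by blast
        thus ?thesis using that[of "[p]" p] by simp
      next
        case 2 then obtain a b where "covers a b" "q \<in> closed_segment (pos a) (pos b)" by blast
        thus ?thesis using that[of "[a, b]" b] by simp
      qed
    qed
    have Sset: "set S \<subseteq> {hd S, r}" using Sform by auto
    have Sh: "?h (hd S) \<le> ?h y" "?h y \<le> ?h r" using pts_heights[OF pd S(1) S(2)] q(2) S(3) by auto
    have B: "cchain [y, x]" using yx by simp
    have XBy: "Xc pos [y, x] (?h y) = fst (pos y)" using hyx by simp
    have XSy: "Xc pos S' (?h y) = fst q" if "cchain S'" "q \<in> pts pos S'" for S'
      using Xc_pts[OF pd that] q(2) by simp
    consider "\<not> r \<le> x" | "r = x" | "r < x" by (auto simp: less_le)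
    thus False
    proof cases
      case 1
      define v where "v = sup r x"
      have "r \<le> v" "x \<le> v" unfolding v_def by auto
      obtain cc where cc: "cchain cc" "hd cc = r" "last cc = v" using chain_exists[OF \<open>r \<le> v\<close>] by blast
      define W where "W = S @ tl cc"
      have W: "cchain W" "hd W = hd S" "last W = v" "set W = set S \<union> set cc" "pts pos S \<subseteq> pts pos W"
        using cchain_append[OF S(1) cc(1), of pos] cc S(3) unfolding W_def by auto
      have qW: "q \<in> pts pos W" using W(5) S(2) by blast
      have "x \<notin> set W"
      proof
        assume "x \<in> set W"
        hence "x \<in> set S \<or> x \<in> set cc" using W(4) by blast
        thus False
        proof
          assume "x \<in> set S"
          hence "x = hd S \<or> x = r" using Sset by auto
          thus False using Sh hyx 1 by auto
        next
          assume "x \<in> set cc"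
          thus False using cchain_order[OF cc(1)] cc(2) 1 by blast
        qed
      qed
      hence dis: "set W \<inter> set [y, x] = {}" using bad_y[OF W(1) qW] by auto
      have hxv: "?h x \<le> ?h v" using height_mono_le[OF pd \<open>x \<le> v\<close>] .
      have t1: "Xc pos W (?h y) \<le> Xc pos [y, x] (?h y)" using XSy[OF W(1) qW] XBy q(3) by simp
      have XBx: "Xc pos [y, x] (?h x) = fst (pos x)" using interp_high[OF hyx] by simp
      have "(Xc pos W (?h x), ?h x) \<in> pts pos W"
        using Xc_in[OF pd W(1)] W Sh hyx hxv by simp
      hence t2: "Xc pos [y, x] (?h x) \<le> Xc pos W (?h x)"
        using leftmost[OF xL] pts_drawing[OF W(1)] XBx by fastforce
      obtain p where "p \<in> pts pos W" "p \<in> pts pos [y, x]"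
        using crossing[OF pd W(1) B _ _ _ _ _ t1 t2] W Sh hyx hxv by fastforce
      thus False using disjoint_chains[OF pd W(1) B dis] by blast
    next
      case 2
      from Sform show False
      proof
        assume "S = [r] \<and> q = pos r"
        thus False using 2 q(2) hyx by simp
      next
        assume "\<exists>p1. S = [p1, r] \<and> covers p1 r \<and> q \<in> closed_segment (pos p1) (pos r)"
        then obtain p1 where p1: "S = [p1, r]" "covers p1 r" "q \<in> closed_segment (pos p1) (pos r)" by blast
        have p1LC: "p1 \<in> ?LC" using p1(2) 2 LCc by simp
        have "p1 \<noteq> y" using bad_y[OF S(1,2)] p1(1) by auto
        hence "?I y (?h y) < ?I p1 (?h y)" using slope[OF p1LC] hyx by blast
        moreover have "?I p1 (?h y) = fst q"
          using seg_interp[OF p1(3)] LCh[OF p1LC] 2 q(2) by simp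
        ultimately show False using q(3) by simp
      qed
    next
      case 3
      obtain y' where y': "covers y' x" "r \<le> y'" using cover_below[OF 3] by blast
      obtain cc where cc: "cchain cc" "hd cc = r" "last cc = y'" using chain_exists[OF y'(2)] by blast
      define W where "W = S @ tl cc"
      have W: "cchain W" "hd W = hd S" "last W = y'" "set W = set S \<union> set cc" "pts pos S \<subseteq> pts pos W"
        using cchain_append[OF S(1) cc(1), of pos] cc S(3) unfolding W_def by auto
      have qW: "q \<in> pts pos W" using W(5) S(2) by blast
      have y'LC: "y' \<in> ?LC" using y'(1) LCc by simp
      have hy'x: "?h y' < ?h x" using LCh[OF y'LC] .
      have hyy': "?h y \<le> ?h y'" using pts_heights[OF pd W(1) qW] W(3) q(2) by simp
      have "y' \<in> set W" using W(4) cc(1) cc(3) by (metis UnI2 cchain.elims(2) last_in_set list.distinct(1))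
      hence "y' \<noteq> y" using bad_y[OF W(1) qW] by auto
      hence lt: "?I y (?h y') < ?I y' (?h y')" using slope[OF y'LC] hy'x by blast
      have "x \<notin> set W"
      proof
        assume "x \<in> set W"
        hence "x \<le> y'" using cchain_order[OF W(1)] W(3) by blast
        thus False using y'(1) unfolding covers_def by (meson leD)
      qed
      hence dis: "set W \<inter> set [y, x] = {}" using bad_y[OF W(1) qW] by auto
      have t1: "Xc pos W (?h y) \<le> Xc pos [y, x] (?h y)" using XSy[OF W(1) qW] XBy q(3) by simp
      have XWy': "Xc pos W (?h y') = fst (pos y')"
        using Xc_pts[OF pd W(1) set_pts[OF W(1) \<open>y' \<in> set W\<close>]] by simp
      have "Xc pos [y, x] (?h y') = ?I y (?h y')" using hy'x by simp
      hence t2: "Xc pos [y, x] (?h y') \<le> Xc pos W (?h y')" using XWy' lt by simp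
      obtain p where "p \<in> pts pos W" "p \<in> pts pos [y, x]"
        using crossing[OF pd W(1) B hyy' _ _ _ _ t1 t2] W Sh hyx hy'x by fastforce
      thus False using disjoint_chains[OF pd W(1) B dis] by blast
    qed
  qed
  thus ?thesis using yx by blast
qed



theorem lemma2p3:
  fixes pos :: "'a::{lattice, finite} \<Rightarrow> real \<times> real"
    and c x :: 'a
  assumes "upper_semimodular TYPE('a)"
    and "slim TYPE('a)"
    and "planar_diagram pos"
    and "CARD('a) \<ge> 4"
    and "is_c_left pos c"
    and "x \<in> left_boundary_chain pos"
    and "x \<le> c"
  shows "card (lower_covers x) \<le> 1"
proof -
  have pd: "planar_diagram pos" by fact
  have cL: "c \<in> left_boundary_chain pos" and cmin: "\<And>d. d \<in> left_boundary_chain pos \<Longrightarrow> doubly_irreducible d \<Longrightarrow> c \<le> d"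
    using assms(5) unfolding is_c_left_def by auto
  have main: "x \<in> left_boundary_chain pos \<Longrightarrow> x \<le> c \<Longrightarrow> card (lower_covers x) \<le> 1" for x
  proof (induction "card {z. z < x}" arbitrary: x rule: less_induct)
    case less
    show ?case
    proof (rule ccontr)
      assume "\<not> card (lower_covers x) \<le> 1"
      hence c2: "card (lower_covers x) \<ge> 2" by simp
      hence ne: "lower_covers x \<noteq> {}" by auto
      obtain y where yx: "covers y x" and yL: "y \<in> left_boundary_chain pos"
        using G1[OF pd less.prems(1) ne] by blast
      have ylx: "y < x" using yx unfolding covers_def by simp
      have "card {z. z < y} < card {z. z < x}"
      proof (rule psubset_card_mono)
        show "{z. z < y} \<subset> {z. z < x}" using ylx by (auto intro: less_trans)
      qed simp
      hence lowy: "card (lower_covers y) \<le> 1" using less.hyps yL less.prems(2) ylx by auto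
      obtain b where bLC: "b \<in> lower_covers x" "b \<noteq> y"
      proof (rule ccontr)
        assume "\<not> thesis"
        hence "lower_covers x \<subseteq> {y}" using that by blast
        hence "card (lower_covers x) \<le> card {y}" by (intro card_mono) auto
        thus False using c2 by simp
      qed
      have bx: "covers b x" using bLC(1) unfolding lower_covers_def by simp
      have yb: "\<not> y \<le> b"
      proof
        assume "y \<le> b"
        hence "y < b" using bLC(2) by simp
        moreover have "b < x" using bx unfolding covers_def by simp
        ultimately show False using yx unfolding covers_def by blast
      qed
      have upy: "upper_covers y \<subseteq> {x}"
      proof
        fix w assume "w \<in> upper_covers y"
        hence yw: "covers y w" unfolding upper_covers_def by simp
        show "w \<in> {x}"
        proof (rule ccontr)
          assume "w \<notin> {x}"
          have wx: "\<not> w \<le> x"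
          proof
            assume "w \<le> x"
            hence "w < x" using \<open>w \<notin> {x}\<close> by auto
            moreover have "y < w" using yw unfolding covers_def by simp
            ultimately show False using yx unfolding covers_def by blast
          qed
          show False using G2[OF pd less.prems(1) yL ylx yw wx bx yb] .
        qed
      qed
      have "card (upper_covers y) \<le> card {x}" using upy by (intro card_mono) auto
      hence "doubly_irreducible y" unfolding doubly_irreducible_def using lowy by simp
      hence "c \<le> y" using cmin yL by blast
      thus False using ylx less.prems(2) by simp
    qed
  qed
  show ?thesis using main assms(6,7) .
qed

end
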